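(* Let $n\ge 96$ and let $\mathcal{H}$ be an $n$-vertex Berge-$K_4$-saturated $3$-graph with the minimum number of hyperedges. Let $X=\{v\in V(\mathcal{H}): d_{\mathcal{H}}(v)\ge 3\}$, $A=\{v\in V(\mathcal{H})\setminus X: \text{every hyperedge containing } v \text{ intersects } X\}$ and $B=V(\mathcal{H})\setminus(X\cup A)$. Then $B=\emptyset$.
   Context: A $3$-graph has all hyperedges of size $3$. A $3$-graph contains a Berge-$K_4$ if there are $4$ distinct vertices and $6$ distinct hyperedges, one containing each of the $6$ pairs of these vertices. $\mathcal{H}$ is Berge-$K_4$-saturated if it contains no Berge-$K_4$ but adding any $3$-set of vertices not already a hyperedge creates a Berge-$K_4$. "Minimum number of hyperedges" means minimum among all Berge-$K_4$-saturated $3$-graphs on $n$ vertices. $d_{\mathcal{H}}(v)$ is the number of hyperedges containing $v$. *)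

theory Defs
  imports Main
begin

definition three_graph :: "'a set \<Rightarrow> 'a set set \<Rightarrow> bool" where
  "three_graph V E \<longleftrightarrow> (\<forall>e\<in>E. e \<subseteq> V \<and> card e = 3)"

definition pairs_of :: "'a set \<Rightarrow> 'a set set" where
  "pairs_of K = {{x, y} | x y. x \<in> K \<and> y \<in> K \<and> x \<noteq> y}"

definition has_berge_K4 :: "'a set set \<Rightarrow> bool" where
  "has_berge_K4 E \<longleftrightarrow> (\<exists>K f. finite K \<and> card K = 4 \<and>
      inj_on f (pairs_of K) \<and> f ` pairs_of K \<subseteq> E \<and>
      (\<forall>p\<in>pairs_of K. p \<subseteq> f p))"

definition berge_K4_saturated :: "'a set \<Rightarrow> 'a set set \<Rightarrow> bool" where
  "berge_K4_saturated V E \<longleftrightarrow> three_graph V E \<and> \<not> has_berge_K4 E \<and>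
     (\<forall>T. T \<subseteq> V \<longrightarrow> card T = 3 \<longrightarrow> T \<notin> E \<longrightarrow> has_berge_K4 (insert T E))"

text \<open>Minimum number of hyperedges among saturated 3-graphs on the same n-vertex set
  (equivalently, among all n-vertex ones, by isomorphism invariance).\<close>
definition min_berge_K4_saturated :: "'a set \<Rightarrow> 'a set set \<Rightarrow> bool" where
  "min_berge_K4_saturated V E \<longleftrightarrow> berge_K4_saturated V E \<and>
     (\<forall>E'. berge_K4_saturated V E' \<longrightarrow> card E \<le> card E')"

definition hdeg :: "'a set set \<Rightarrow> 'a \<Rightarrow> nat" where
  "hdeg E v = card {e \<in> E. v \<in> e}"

end

theory Submission
  imports Defs
begin

lemma pair_in_pairs: "x \<in> K \<Longrightarrow> y \<in> K \<Longrightarrow> x \<noteq> y \<Longrightarrow> {x, y} \<in> pairs_of K"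
  unfolding pairs_of_def by blast

lemma core_image:
  assumes inj: "inj_on f (pairs_of K)" and sub: "f ` pairs_of K \<subseteq> F"
    and cov: "\<forall>p\<in>pairs_of K. p \<subseteq> f p" and k: "k \<in> K"
  shows "inj_on (\<lambda>y. f {k, y}) (K - {k})"
    and "(\<lambda>y. f {k, y}) ` (K - {k}) \<subseteq> {g \<in> F. k \<in> g}"
proof -
  show "inj_on (\<lambda>y. f {k, y}) (K - {k})"
  proof (rule inj_onI)
    fix x y assume x: "x \<in> K - {k}" and y: "y \<in> K - {k}" and eq: "f {k, x} = f {k, y}"
    have "{k, x} \<in> pairs_of K" "{k, y} \<in> pairs_of K" using x y k by (auto intro: pair_in_pairs)
    then have "{k, x} = {k, y}" using inj eq by (auto dest: inj_onD)
    then show "x = y" using x y by (auto simp: doubleton_eq_iff)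
  qed
  show "(\<lambda>y. f {k, y}) ` (K - {k}) \<subseteq> {g \<in> F. k \<in> g}"
  proof
    fix g assume "g \<in> (\<lambda>y. f {k, y}) ` (K - {k})"
    then obtain y where y: "y \<in> K - {k}" and g: "g = f {k, y}" by blast
    have p: "{k, y} \<in> pairs_of K" using y k by (auto intro: pair_in_pairs)
    then show "g \<in> {g \<in> F. k \<in> g}" using sub cov g by auto
  qed
qed

lemma core_deg:
  assumes fin: "finite F" and "finite K" and "card K = 4"
    and inj: "inj_on f (pairs_of K)" and sub: "f ` pairs_of K \<subseteq> F"
    and cov: "\<forall>p\<in>pairs_of K. p \<subseteq> f p" and k: "k \<in> K"
  shows "3 \<le> card {g \<in> F. k \<in> g}"
proof -
  have c: "card (K - {k}) = 3" using assms by simp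
  have "card ((\<lambda>y. f {k, y}) ` (K - {k})) = 3"
    using core_image(1)[OF inj sub cov k] c by (simp add: card_image)
  moreover have "card ((\<lambda>y. f {k, y}) ` (K - {k})) \<le> card {g \<in> F. k \<in> g}"
    using core_image(2)[OF inj sub cov k] fin by (intro card_mono) auto
  ultimately show ?thesis by simp
qed

lemma key:
  assumes fin: "finite F" and fK: "finite K" and cK: "card K = 4"
    and inj: "inj_on f (pairs_of K)" and sub: "f ` pairs_of K \<subseteq> F"
    and cov: "\<forall>p\<in>pairs_of K. p \<subseteq> f p" and a: "a \<in> K"
    and da: "card {g \<in> F. a \<in> g} \<le> 3"
    and eF: "e \<in> F" and TF: "T \<in> F" and eT: "e \<noteq> T"
    and e: "e = {a, b, c}" and T: "T = {a, b, v}" and cK': "c \<notin> K"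
  shows "b \<in> K \<and> v \<in> K \<and> v \<noteq> a \<and> f {a, v} = T"
proof -
  let ?h = "\<lambda>y. f {k, y}"
  have c: "card (K - {a}) = 3" using fK cK a by simp
  have im: "(\<lambda>y. f {a, y}) ` (K - {a}) \<subseteq> {g \<in> F. a \<in> g}"
    using core_image(2)[OF inj sub cov a] .
  have ci: "card ((\<lambda>y. f {a, y}) ` (K - {a})) = 3"
    using core_image(1)[OF inj sub cov a] c by (simp add: card_image)
  have fS: "finite {g \<in> F. a \<in> g}" using fin by simp
  have eqS: "(\<lambda>y. f {a, y}) ` (K - {a}) = {g \<in> F. a \<in> g}"
  proof -
    have "card ((\<lambda>y. f {a, y}) ` (K - {a})) \<le> card {g \<in> F. a \<in> g}"
      using card_mono[OF fS im] .
    then show ?thesis using card_subset_eq[OF fS im] ci da by simp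
  qed
  have "e \<in> {g \<in> F. a \<in> g}" using eF e by simp
  then have "e \<in> (\<lambda>y. f {a, y}) ` (K - {a})" using eqS by simp
  then obtain w where w: "w \<in> K - {a}" and ew: "e = f {a, w}" by (rule imageE)
  have "{a, w} \<in> pairs_of K" using w a by (auto intro: pair_in_pairs)
  then have "{a, w} \<subseteq> e" using cov ew by auto
  then have "w = b" using w e cK' by auto
  then have bK: "b \<in> K" and fab: "f {a, b} = e" using w ew by auto
  have "T \<in> {g \<in> F. a \<in> g}" using TF T by simp
  then have "T \<in> (\<lambda>y. f {a, y}) ` (K - {a})" using eqS by simp
  then obtain x where x: "x \<in> K - {a}" and Tx: "T = f {a, x}" by (rule imageE)
  have "{a, x} \<in> pairs_of K" using x a by (auto intro: pair_in_pairs)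
  then have "{a, x} \<subseteq> T" using cov Tx by auto
  then have "x = b \<or> x = v" using x T by auto
  moreover have "x \<noteq> b" using fab Tx eT by auto
  ultimately have "x = v" by simp
  then show ?thesis using bK x Tx by auto
qed

theorem lemma3p4:
  fixes V :: "'a set" and E :: "'a set set" and n :: nat
  assumes "finite V" and "card V = n" and "n \<ge> 96"
    and "min_berge_K4_saturated V E"
  defines "X \<equiv> {v \<in> V. hdeg E v \<ge> 3}"
  defines "A \<equiv> {v \<in> V - X. \<forall>e\<in>E. v \<in> e \<longrightarrow> e \<inter> X \<noteq> {}}"
  defines "B \<equiv> V - (X \<union> A)"
  shows "B = {}"
proof (rule ccontr)
  assume "B \<noteq> {}"
  then obtain x where "x \<in> B" by blast
  then obtain e where eE: "e \<in> E" and xe: "x \<in> e" and eX: "e \<inter> X = {}"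
    unfolding B_def A_def by auto
  have sat: "berge_K4_saturated V E" using assms(4) unfolding min_berge_K4_saturated_def by simp
  have tg: "three_graph V E" and noK: "\<not> has_berge_K4 E"
    and satT: "\<forall>T. T \<subseteq> V \<longrightarrow> card T = 3 \<longrightarrow> T \<notin> E \<longrightarrow> has_berge_K4 (insert T E)"
    using sat unfolding berge_K4_saturated_def by auto
  have eV: "e \<subseteq> V" and ce: "card e = 3" using tg eE unfolding three_graph_def by auto
  have finE: "finite E"
  proof -
    have "E \<subseteq> Pow V" using tg unfolding three_graph_def by auto
    then show ?thesis using assms(1) finite_subset by blast
  qed
  have degs: "\<And>u. u \<in> e \<Longrightarrow> card {g \<in> E. u \<in> g} \<le> 2"
  proof -
    fix u assume "u \<in> e"
    then have "u \<notin> X" "u \<in> V" using eX eV by auto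
    then show "card {g \<in> E. u \<in> g} \<le> 2" unfolding X_def hdeg_def by simp
  qed
  obtain a b c where e: "e = {a, b, c}" and ab: "a \<noteq> b" and ac: "a \<noteq> c" and bc: "b \<noteq> c"
    using ce by (auto simp: card_Suc_eq numeral_3_eq_3)
  have da: "card {g \<in> E. a \<in> g} \<le> 2" and db: "card {g \<in> E. b \<in> g} \<le> 2"
    and dc: "card {g \<in> E. c \<in> g} \<le> 2" using degs e by auto
  let ?W = "{v \<in> V - e. {a, b, v} \<in> E}"
  have injW: "inj_on (\<lambda>v. {a, b, v}) ?W"
  proof (rule inj_onI)
    fix u w assume "u \<in> ?W" "w \<in> ?W" "{a, b, u} = {a, b, w}"
    then have "u \<noteq> a" "u \<noteq> b" "w \<noteq> a" "w \<noteq> b" "u \<in> {a, b, w}" using e by auto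
    then show "u = w" by blast
  qed
  have imW: "(\<lambda>v. {a, b, v}) ` ?W \<subseteq> {g \<in> E. a \<in> g} - {e}"
    using e by auto
  have "card ?W \<le> card ({g \<in> E. a \<in> g} - {e})"
    using card_inj_on_le[OF injW imW] finE by simp
  also have "\<dots> \<le> 1" using da eE e by (simp add: card_Diff_singleton)
  finally have cW: "card ?W \<le> 1" .
  have "card (V - e) \<ge> 93" using assms(1-3) eV ce by (simp add: card_Diff_subset finite_subset)
  then have "\<not> (V - e \<subseteq> ?W)"
  proof -
    have "V - e \<subseteq> ?W \<Longrightarrow> card (V - e) \<le> card ?W"
      using assms(1) by (intro card_mono) auto
    then show ?thesis using cW \<open>card (V - e) \<ge> 93\<close> by linarith
  qed
  then obtain v where vV: "v \<in> V" and ve: "v \<notin> e" and TnE: "{a, b, v} \<notin> E" by blast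
  define T where "T = {a, b, v}"
  have va: "v \<noteq> a" and vb: "v \<noteq> b" and vc: "v \<noteq> c" using ve e by auto
  have TV: "T \<subseteq> V" using vV eV e T_def by auto
  have cT: "card T = 3" using T_def ab va vb by auto
  have "has_berge_K4 (insert T E)" using satT TV cT TnE T_def by auto
  then obtain K f where fK: "finite K" and cK: "card K = 4" and inj: "inj_on f (pairs_of K)"
    and sub: "f ` pairs_of K \<subseteq> insert T E" and cov: "\<forall>p\<in>pairs_of K. p \<subseteq> f p"
    unfolding has_berge_K4_def by blast
  let ?F = "insert T E"
  have finF: "finite ?F" using finE by simp
  have "T \<in> f ` pairs_of K"
  proof (rule ccontr)
    assume "T \<notin> f ` pairs_of K"
    then have "f ` pairs_of K \<subseteq> E" using sub by auto
    then have "has_berge_K4 E" unfolding has_berge_K4_def using fK cK inj cov by blast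
    then show False using noK by simp
  qed
  then obtain p0 where p0: "p0 \<in> pairs_of K" and fp0: "f p0 = T" by blast
  obtain y z where yz: "p0 = {y, z}" "y \<in> K" "z \<in> K" "y \<noteq> z"
    using p0 unfolding pairs_of_def by blast
  have "p0 \<subseteq> T" using cov p0 fp0 by auto
  then have abK: "a \<in> K \<or> b \<in> K" using yz T_def by auto
  have Fc: "{g \<in> ?F. c \<in> g} = {g \<in> E. c \<in> g}" using T_def ac bc vc by auto
  have cnK: "c \<notin> K"
  proof
    assume "c \<in> K"
    then have "3 \<le> card {g \<in> ?F. c \<in> g}" using core_deg[OF finF fK cK inj sub cov] by blast
    then show False using Fc dc by simp
  qed
  have Fa: "card {g \<in> ?F. a \<in> g} \<le> 3"
  proof -
    have "{g \<in> ?F. a \<in> g} \<subseteq> insert T {g \<in> E. a \<in> g}" by auto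
    then have "card {g \<in> ?F. a \<in> g} \<le> card (insert T {g \<in> E. a \<in> g})"
      using finE by (intro card_mono) auto
    also have "\<dots> \<le> Suc (card {g \<in> E. a \<in> g})" using finE by (simp add: card_insert_if)
    finally show ?thesis using da by simp
  qed
  have Fb: "card {g \<in> ?F. b \<in> g} \<le> 3"
  proof -
    have "{g \<in> ?F. b \<in> g} \<subseteq> insert T {g \<in> E. b \<in> g}" by auto
    then have "card {g \<in> ?F. b \<in> g} \<le> card (insert T {g \<in> E. b \<in> g})"
      using finE by (intro card_mono) auto
    also have "\<dots> \<le> Suc (card {g \<in> E. b \<in> g})" using finE by (simp add: card_insert_if)
    finally show ?thesis using db by simp
  qed
  have eT: "e \<noteq> T" using eE TnE T_def by auto
  have eF: "e \<in> ?F" and TF: "T \<in> ?F" using eE by auto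
  have both: "a \<in> K \<and> b \<in> K"
  proof (cases "a \<in> K")
    case True
    then show ?thesis using key[OF finF fK cK inj sub cov True Fa eF TF eT e T_def cnK] by simp
  next
    case False
    then have bK: "b \<in> K" using abK by simp
    have e': "e = {b, a, c}" and T': "T = {b, a, v}" using e T_def by auto
    show ?thesis using key[OF finF fK cK inj sub cov bK Fb eF TF eT e' T' cnK] bK by simp
  qed
  have e': "e = {b, a, c}" and T': "T = {b, a, v}" using e T_def by auto
  have r1: "v \<in> K \<and> f {a, v} = T" using key[OF finF fK cK inj sub cov _ Fa eF TF eT e T_def cnK] both by simp
  have r2: "f {b, v} = T" using key[OF finF fK cK inj sub cov _ Fb eF TF eT e' T' cnK] both by simp
  have "{a, v} \<in> pairs_of K" "{b, v} \<in> pairs_of K" using both r1 va vb by (auto intro: pair_in_pairs)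
  then have "{a, v} = {b, v}" using inj r1 r2 by (auto dest: inj_onD)
  then show False using ab va vb by (auto simp: doubleton_eq_iff)
qed

end
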